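(* Let $k,I>0$ and $\alpha_2>\alpha_1\ge0$ with $\alpha_1\notin\mathbb{N}$, $\alpha_2\in\mathbb{N}$ and $\lceil\alpha_1\rceil+1\le\alpha_2$. Let $u_0^{(i)}\in\mathbb{R}$, $i=0,\dots,\alpha_2-1$, be given, and let $f:[0,I]\times\mathbb{R}\to\mathbb{R}$ be continuous. Define $$G=\Big\{(t,v):t\in[0,I],\ |v|\le\frac{I^{\lceil\alpha_1\rceil-\alpha_1}}{\Gamma(\lceil\alpha_1\rceil-\alpha_1+1)}\Big(k+\sum_{i=0}^{\alpha_2-\lceil\alpha_1\rceil-1}\frac{I^i}{i!}\big|u_0^{(i+\lceil\alpha_1\rceil)}\big|\Big)\Big\}$$ and $M:=\sup_{(t,v)\in G}|f(t,v)|$. Set $h:=I$ if $M=0$, and otherwise $$h:=\min\Big\{I,\Big(\frac{k\,\Gamma(\alpha_2-\lceil\alpha_1\rceil+1)}{M}\Big)^{\frac{1}{\alpha_2-\lceil\alpha_1\rceil}}\Big\}.$$ Then the initial value problem $$D^{\alpha_2}u(t)=f\big(t,D^{\alpha_1}u(t)\big),\qquad u^{(i)}(0)=u_0^{(i)},\ i=0,1,\dots,\alpha_2-1,$$ has at least one solution $u\in C^{\alpha_2}[0,h]$ on $[0,h]$.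
   Context: $\lceil\cdot\rceil$ is the ceiling function and $\mathbb{N}=\{1,2,\dots\}$. For $\delta>0$ the Riemann–Liouville integral is $J^\delta u(t)=\frac{1}{\Gamma(\delta)}\int_0^t(t-s)^{\delta-1}u(s)\,ds$, and $J^0$ is the identity. For $\beta\ge0$ the Caputo derivative is $D^\beta u=J^{\lceil\beta\rceil-\beta}u^{(\lceil\beta\rceil)}$ (so $D^{\alpha_2}u=u^{(\alpha_2)}$ for integer $\alpha_2$). A solution on $[0,h]$ is a function satisfying the differential equation for all $t\in[0,h]$ together with the initial conditions. *)

theory Defs
  imports "HOL-Analysis.Analysis"
begin

definition RL_int :: "real \<Rightarrow> (real \<Rightarrow> real) \<Rightarrow> real \<Rightarrow> real" where
  "RL_int \<delta> g t =
     (if \<delta> = 0 then g t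
      else integral {0..t} (\<lambda>s. (t - s) powr (\<delta> - 1) * g s) / Gamma \<delta>)"

text \<open>Caputo derivative D^beta u = J^(ceil beta - beta) u^(ceil beta), where the
  function u is given together with its derivatives: U j is the j-th derivative of u = U 0.\<close>
definition caputo :: "real \<Rightarrow> (nat \<Rightarrow> real \<Rightarrow> real) \<Rightarrow> real \<Rightarrow> real" where
  "caputo \<beta> U t = RL_int (of_int \<lceil>\<beta>\<rceil> - \<beta>) (U (nat \<lceil>\<beta>\<rceil>)) t"

definition Cn_on :: "nat \<Rightarrow> real \<Rightarrow> (nat \<Rightarrow> real \<Rightarrow> real) \<Rightarrow> bool" where
  "Cn_on n h U \<longleftrightarrow>
     (\<forall>j<n. \<forall>t\<in>{0..h}. (U j has_real_derivative U (Suc j) t) (at t within {0..h}))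
     \<and> continuous_on {0..h} (U n)"

end

theory Submission
  imports Defs "HOL-Complex_Analysis.Great_Picard"
begin


fun iint :: "nat \<Rightarrow> (real \<Rightarrow> real) \<Rightarrow> real \<Rightarrow> real" where
  "iint 0 g t = g t"
| "iint (Suc k) g t = integral {0..t} (iint k g)"

lemma pow_has_integral:
  assumes "0 \<le> (t::real)"
  shows "((\<lambda>s. s ^ k / fact k) has_integral (t ^ Suc k / fact (Suc k))) {0..t}"
proof -
  have "((\<lambda>s. s ^ k / fact k) has_integral ((\<lambda>s. s ^ Suc k / fact (Suc k)) t - (\<lambda>s. s ^ Suc k / fact (Suc k)) 0)) {0..t}"
  proof (rule fundamental_theorem_of_calculus[OF assms])
      fix x assume "x \<in> {0..t}"
      have "((\<lambda>s. s ^ Suc k / fact (Suc k)) has_real_derivative (real (Suc k) * x ^ k) / fact (Suc k)) (at x within {0..t})"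
        using DERIV_cdivide[OF DERIV_pow[of "Suc k" x "{0..t}"], of "fact (Suc k)"] by simp
      moreover have "(real (Suc k) * x ^ k) / fact (Suc k) = x ^ k / fact k"
      proof -
        have f: "(fact (Suc k)::real) = real (Suc k) * fact k" by simp
        show ?thesis unfolding f by (rule mult_divide_mult_cancel_left) simp
      qed
      ultimately show "((\<lambda>s. s ^ Suc k / fact (Suc k)) has_vector_derivative x ^ k / fact k) (at x within {0..t})"
        by (simp add: has_real_derivative_iff_has_vector_derivative)
  qed
  then show ?thesis by simp
qed

lemma iint_Suc_fun: "iint (Suc k) g = (\<lambda>t. integral {0..t} (iint k g))"
  by (simp add: fun_eq_iff)

lemma iint_0_fun: "iint 0 g = g"
  by (simp add: fun_eq_iff)

lemma iint_props:
  assumes "continuous_on {0..h} g"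
  shows "continuous_on {0..h} (iint k g) \<and>
         (\<forall>t\<in>{0..h}. ((iint (Suc k) g) has_real_derivative iint k g t) (at t within {0..h}))"
proof (induction k)
  case 0
  have "\<forall>t\<in>{0..h}. ((iint (Suc 0) g) has_real_derivative iint 0 g t) (at t within {0..h})"
    unfolding iint_Suc_fun iint_0_fun using integral_has_real_derivative[OF assms] by blast
  then show ?case using assms by (simp only: iint_0_fun) 
next
  case (Suc k)
  have c: "continuous_on {0..h} (iint (Suc k) g)"
    unfolding continuous_on_eq_continuous_within
    using Suc.IH DERIV_continuous by blast
  have "\<forall>t\<in>{0..h}. ((iint (Suc (Suc k)) g) has_real_derivative iint (Suc k) g t) (at t within {0..h})"
  proof
    fix t assume "t \<in> {0..h}"
    from integral_has_real_derivative[OF c this] show "((iint (Suc (Suc k)) g) has_real_derivative iint (Suc k) g t) (at t within {0..h})"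
      by (simp only: iint_Suc_fun[of "Suc k"])
  qed
  with c show ?case by blast
qed

lemma iint_zero: "iint (Suc k) g 0 = 0"
  by simp

lemma iint_local:
  assumes "\<forall>s\<in>{0..a}. g s = g' s" "t \<in> {0..a}"
  shows "iint k g t = iint k g' t"
  using assms(2)
proof (induction k arbitrary: t)
  case 0 then show ?case using assms(1) by simp
next
  case (Suc k)
  have "integral {0..t} (iint k g) = integral {0..t} (iint k g')"
    by (rule integral_cong) (use Suc in auto)
  then show ?case by simp
qed

lemma iint_diff_bound:
  assumes "continuous_on {0..h} g" "continuous_on {0..h} g'"
    and "\<forall>s\<in>{0..h}. \<bar>g s - g' s\<bar> \<le> e" "t \<in> {0..h}"
  shows "\<bar>iint k g t - iint k g' t\<bar> \<le> e * t ^ k / fact k"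
  using assms(4)
proof (induction k arbitrary: t)
  case 0 then show ?case using assms(3) by simp
next
  case (Suc k)
  have sub: "{0..t} \<subseteq> {0..h}" using Suc.prems by auto
  have i1: "iint k g integrable_on {0..t}"
    by (rule integrable_continuous_interval, rule continuous_on_subset[OF conjunct1[OF iint_props[OF assms(1)]] sub])
  have i2: "iint k g' integrable_on {0..t}"
    by (rule integrable_continuous_interval, rule continuous_on_subset[OF conjunct1[OF iint_props[OF assms(2)]] sub])
  have hi: "((\<lambda>s. e * (s ^ k / fact k)) has_integral e * (t ^ Suc k / fact (Suc k))) {0..t}"
    using pow_has_integral[of t k] Suc.prems by (intro has_integral_mult_right) auto
  have "norm (integral {0..t} (\<lambda>s. iint k g s - iint k g' s)) \<le> integral {0..t} (\<lambda>s. e * (s ^ k / fact k))"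
  proof (rule integral_norm_bound_integral)
    show "(\<lambda>s. iint k g s - iint k g' s) integrable_on {0..t}" using i1 i2 by (rule integrable_diff)
    show "(\<lambda>s. e * (s ^ k / fact k)) integrable_on {0..t}" using hi by (rule has_integral_integrable)
    fix x assume "x \<in> {0..t}"
    then have "x \<in> {0..h}" using sub by blast
    then show "norm (iint k g x - iint k g' x) \<le> e * (x ^ k / fact k)" using Suc.IH[of x] by simp
  qed
  also have "\<dots> = e * t ^ Suc k / fact (Suc k)" using integral_unique[OF hi] by simp
  finally have "\<bar>integral {0..t} (\<lambda>s. iint k g s - iint k g' s)\<bar> \<le> e * t ^ Suc k / fact (Suc k)" by simp
  then show ?case unfolding iint.simps integral_diff[OF i1 i2, symmetric] .
qed

lemma iint_zero_fun: "iint k (\<lambda>_. 0) = (\<lambda>_. 0)"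
  by (induction k) (simp_all only: iint_Suc_fun iint_0_fun integral_0)

lemma iint_lip:
  assumes "continuous_on {0..h} g" "\<forall>s\<in>{0..h}. \<bar>g s\<bar> \<le> M"
    and "0 \<le> s" "s \<le> t" "t \<le> h"
  shows "\<bar>iint (Suc k) g t - iint (Suc k) g s\<bar> \<le> M * h ^ k / fact k * (t - s)"
proof -
  have M0: "0 \<le> M" using assms by force
  have i: "iint k g integrable_on {0..t}"
  proof -
    have "{0..t} \<subseteq> {0..h}" using assms by auto
    then show ?thesis using iint_props[OF assms(1)] integrable_continuous_interval continuous_on_subset by blast
  qed
  have "integral {0..s} (iint k g) + integral {s..t} (iint k g) = integral {0..t} (iint k g)"
    using Henstock_Kurzweil_Integration.integral_combine[OF assms(3,4) i] .
  then have eq: "iint (Suc k) g t - iint (Suc k) g s = integral {s..t} (iint k g)" by simp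
  have z: "(\<lambda>s. 0) = (\<lambda>s::real. 0::real)" by simp
  have bnd: "\<bar>iint k g x\<bar> \<le> M * h ^ k / fact k" if "x \<in> {s..t}" for x
  proof -
    have "\<bar>iint k g x - iint k (\<lambda>_. 0) x\<bar> \<le> M * x ^ k / fact k"
      by (rule iint_diff_bound[of h]) (use assms that in auto)
    moreover have "iint k (\<lambda>_. 0) x = 0" by (simp add: iint_zero_fun)
    moreover have "M * x ^ k / fact k \<le> M * h ^ k / fact k"
      using that assms M0 by (auto intro!: divide_right_mono mult_left_mono power_mono)
    ultimately show ?thesis by simp
  qed
  have isub: "iint k g integrable_on {s..t}"
    using i assms integrable_subinterval_real[OF i] by auto
  have B0: "0 \<le> M * h ^ k / fact k" using M0 assms by simp
  have "norm (integral {s..t} (iint k g)) \<le> M * h ^ k / fact k * Henstock_Kurzweil_Integration.content {s..t}"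
    by (rule has_integral_bound_real[OF B0 finite.emptyI integrable_integral[OF isub]]) (use bnd in auto)
  then show ?thesis using eq assms by simp
qed




definition Kf :: "real \<Rightarrow> (real \<Rightarrow> real) \<Rightarrow> real \<Rightarrow> real" where
  "Kf \<beta> u t = integral {0..t} (\<lambda>r. r powr (\<beta> - 1) * u (t - r))"

lemma spike_pt:
  fixes f :: "real \<Rightarrow> real"
  assumes "f integrable_on S"
  shows "f integrable_on (S - {a}) \<and> integral (S - {a}) f = integral S f"
proof -
  have "{x \<in> S - (S - {a}). f x \<noteq> 0} \<subseteq> {a}" by blast
  then have n1: "negligible {x \<in> S - (S - {a}). f x \<noteq> 0}"
    using negligible_subset negligible_sing by blast
  have e0: "{x \<in> (S - {a}) - S. f x \<noteq> 0} = {}" by blast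
  have n2: "negligible {x \<in> (S - {a}) - S. f x \<noteq> 0}" unfolding e0 by (rule negligible_empty)
  show ?thesis using integrable_spike_set[OF assms n1 n2] integral_spike_set[OF n1 n2] by simp
qed

lemma powr_abs_int:
  assumes "\<beta> > 0" "0 \<le> (t::real)"
  shows "(\<lambda>r. r powr (\<beta> - 1)) absolutely_integrable_on {0..t}"
  by (rule nonnegative_absolutely_integrable_1) (use integrable_on_powr_from_0[of "\<beta> - 1" t] assms in auto)

lemma K_int:
  fixes u :: "real \<Rightarrow> real" and t h \<beta> :: real
  assumes b: "\<beta> > 0" and u: "continuous_on {0..h} u" and t: "t \<in> {0..h}"
  shows "(\<lambda>r. r powr (\<beta> - 1) * u (t - r)) absolutely_integrable_on {0..t}"
proof -
  have cu: "continuous_on {0..t} (\<lambda>r. u (t - r))"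
    by (rule continuous_on_compose2[OF u]) (use t in \<open>auto intro!: continuous_intros\<close>)
  have "(\<lambda>r. u (t - r) * r powr (\<beta> - 1)) absolutely_integrable_on {0..t}"
  proof (rule absolutely_integrable_bounded_measurable_product_real)
    show "(\<lambda>r. u (t - r)) \<in> borel_measurable (lebesgue_on {0..t})"
      by (rule continuous_imp_measurable_on_sets_lebesgue[OF cu]) simp
    show "bounded ((\<lambda>r. u (t - r)) ` {0..t})"
      by (rule compact_imp_bounded, rule compact_continuous_image[OF cu]) simp
    show "(\<lambda>r. r powr (\<beta> - 1)) absolutely_integrable_on {0..t}"
      using powr_abs_int b t by auto
  qed simp
  then show ?thesis by (simp add: mult.commute)
qed

lemma K_integrable:
  fixes u v :: "real \<Rightarrow> real" and t h \<beta> e :: real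
  assumes "\<beta> > 0" "continuous_on {0..h} u" "t \<in> {0..h}"
  shows "(\<lambda>r. r powr (\<beta> - 1) * u (t - r)) integrable_on {0..t}"
  using K_int[OF assms] absolutely_integrable_on_def by blast

lemma K_local:
  fixes u v :: "real \<Rightarrow> real" and t h \<beta> e :: real
  assumes "\<forall>s\<in>{0..t}. u s = v s"
  shows "Kf \<beta> u t = Kf \<beta> v t"
  unfolding Kf_def by (rule integral_cong) (use assms in auto)

lemma K_bound:
  fixes u v :: "real \<Rightarrow> real" and t h \<beta> e :: real
  assumes b: "\<beta> > 0" and u: "continuous_on {0..h} u" and t: "t \<in> {0..h}"
    and e: "\<forall>s\<in>{0..t}. \<bar>u s\<bar> \<le> e"
  shows "\<bar>Kf \<beta> u t\<bar> \<le> e * (t powr \<beta> / \<beta>)"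
proof -
  have hi: "((\<lambda>r. e * r powr (\<beta> - 1)) has_integral e * (t powr \<beta> / \<beta>)) {0..t}"
    using has_integral_mult_right[OF has_integral_powr_from_0[of "\<beta> - 1" t], of e] b t by simp
  have "norm (Kf \<beta> u t) \<le> integral {0..t} (\<lambda>r. e * r powr (\<beta> - 1))"
    unfolding Kf_def
  proof (rule integral_norm_bound_integral)
    show "(\<lambda>r. r powr (\<beta> - 1) * u (t - r)) integrable_on {0..t}" by (rule K_integrable[OF b u t])
    show "(\<lambda>r. e * r powr (\<beta> - 1)) integrable_on {0..t}" using hi by (rule has_integral_integrable)
    fix x assume x: "x \<in> {0..t}"
    then have "\<bar>u (t - x)\<bar> \<le> e" using e by auto
    moreover have "0 \<le> x powr (\<beta> - 1)" by simp
    ultimately show "norm (x powr (\<beta> - 1) * u (t - x)) \<le> e * x powr (\<beta> - 1)"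
      by (simp add: abs_mult mult.commute mult_right_mono)
  qed
  then show ?thesis using integral_unique[OF hi] by simp
qed

lemma K_diff:
  fixes u v :: "real \<Rightarrow> real" and t h \<beta> e :: real
  assumes b: "\<beta> > 0" and u: "continuous_on {0..h} u" and v: "continuous_on {0..h} v" and t: "t \<in> {0..h}"
  shows "Kf \<beta> u t - Kf \<beta> v t = Kf \<beta> (\<lambda>s. u s - v s) t"
  unfolding Kf_def integral_diff[OF K_integrable[OF b u t] K_integrable[OF b v t], symmetric]
  by (simp add: algebra_simps)

lemma K_RL:
  fixes u v :: "real \<Rightarrow> real" and t h \<beta> e :: real
  assumes b: "\<beta> > 0" and u: "continuous_on {0..h} u" and t: "t \<in> {0..h}"
  shows "RL_int \<beta> u t = Kf \<beta> u t / Gamma \<beta>"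
proof -
  have hK: "((\<lambda>r. r powr (\<beta> - 1) * u (t - r)) has_integral Kf \<beta> u t) (cbox 0 t)"
    unfolding Kf_def using K_integrable[OF b u t] by (simp add: integrable_integral)
  have "((\<lambda>x. (\<lambda>r. r powr (\<beta> - 1) * u (t - r)) ((-1) *\<^sub>R x + t)) has_integral
        (1 / (\<bar>-1\<bar> ^ DIM(real))) *\<^sub>R Kf \<beta> u t)
        ((\<lambda>x. (1 / (-1)) *\<^sub>R x + - ((1 / (-1)) *\<^sub>R t)) ` cbox 0 t)"
    by (rule has_integral_affinity[OF hK]) simp
  moreover have "((\<lambda>x. (1 / (-1)) *\<^sub>R x + - ((1 / (-1)) *\<^sub>R t)) ` cbox 0 t) = {0..t}"
  proof -
    have "(\<lambda>x::real. t - x) ` {0..t} = {0..t}"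
    proof
      show "(\<lambda>x::real. t - x) ` {0..t} \<subseteq> {0..t}" by auto
      show "{0..t} \<subseteq> (\<lambda>x::real. t - x) ` {0..t}"
      proof
        fix y assume "y \<in> {0..t}"
        then show "y \<in> (\<lambda>x::real. t - x) ` {0..t}" by (intro image_eqI[of _ _ "t - y"]) auto
      qed
    qed
    then show ?thesis by simp
  qed
  ultimately have "((\<lambda>s. (t - s) powr (\<beta> - 1) * u s) has_integral Kf \<beta> u t) {0..t}"
    by simp
  then show ?thesis using b unfolding RL_int_def by (simp add: integral_unique)
qed


lemma K_cont:
  fixes u :: "real \<Rightarrow> real" and h \<beta> :: real
  assumes b: "\<beta> > 0" and u: "continuous_on {0..h} u"
  shows "continuous_on {0..h} (Kf \<beta> u)"
proof (cases "0 \<le> h")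
  case False
  then have "{0..h} = {}" by auto
  then show ?thesis by simp
next
  case h0: True
  define v where "v x = u (max 0 (min h x))" for x
  have cv: "continuous_on UNIV v"
    unfolding v_def by (rule continuous_on_compose2[OF u]) (use h0 in \<open>auto intro!: continuous_intros\<close>)
  have vu: "v x = u x" if "x \<in> {0..h}" for x using that by (simp add: v_def)
  have "bounded (u ` {0..h})"
    by (rule compact_imp_bounded, rule compact_continuous_image[OF u]) simp
  then obtain Bu where Bu: "Bu > 0" "\<And>y. y \<in> u ` {0..h} \<Longrightarrow> norm y \<le> Bu"
    using bounded_pos by metis
  have vB: "\<bar>v x\<bar> \<le> Bu" for x
    using Bu(2)[of "v x"] h0 unfolding v_def by auto
  define F where "F t r = (if r \<in> {0..t} then r powr (\<beta> - 1) * v (t - r) else 0)" for t r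
  have cv': "continuous_on {0..h} v" using cv continuous_on_subset by blast
  have Fint: "F t integrable_on {0..h}" if "t \<in> {0..h}" for t
  proof -
    have "(\<lambda>r. r powr (\<beta> - 1) * v (t - r)) integrable_on ({0..t} \<inter> {0..h})"
      using K_integrable[OF b cv' that] that by (simp add: Int_absorb2)
    then show ?thesis unfolding F_def by (subst integrable_restrict_Int)
  qed
  have Keq: "Kf \<beta> u t = integral {0..h} (F t)" if t: "t \<in> {0..h}" for t
  proof -
    have "Kf \<beta> u t = integral {0..t} (\<lambda>r. r powr (\<beta> - 1) * v (t - r))"
      unfolding Kf_def by (rule integral_cong) (use t vu in auto)
    also have "\<dots> = integral ({0..t} \<inter> {0..h}) (\<lambda>r. r powr (\<beta> - 1) * v (t - r))"
      using t by (simp add: Int_absorb2)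
    also have "\<dots> = integral {0..h} (F t)"
      unfolding F_def by (rule integral_restrict_Int[symmetric])
    finally show ?thesis .
  qed
  show ?thesis
  proof (rule continuous_on_sequentiallyI)
    fix x :: "nat \<Rightarrow> real" and a
    assume xS: "\<forall>n. x n \<in> {0..h}" and aS: "a \<in> {0..h}" and xa: "x \<longlonglongrightarrow> a"
    let ?S = "{0..h} - {a}"
    have "(\<lambda>n. integral ?S (F (x n))) \<longlonglongrightarrow> integral ?S (F a)"
    proof (rule dominated_convergence(2))
      show "F (x n) integrable_on ?S" for n using spike_pt[OF Fint[OF xS[rule_format, of n]]] by blast
      have "(\<lambda>r. Bu * r powr (\<beta> - 1)) integrable_on {0..h}"
        using integrable_on_cmult_left[OF integrable_on_powr_from_0[of "\<beta> - 1" h], of Bu] b h0 by simp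
      then show "(\<lambda>r. Bu * r powr (\<beta> - 1)) integrable_on ?S" using spike_pt by blast
      fix n r assume r: "r \<in> ?S"
      show "norm (F (x n) r) \<le> Bu * r powr (\<beta> - 1)"
        unfolding F_def using vB[of "x n - r"] r
        by (auto simp: abs_mult mult.commute[of Bu] intro!: mult_left_mono)
    next
      fix r assume r: "r \<in> ?S"
      show "(\<lambda>n. F (x n) r) \<longlonglongrightarrow> F a r"
      proof (cases "r < a")
        case True
        have ev: "\<forall>\<^sub>F n in sequentially. r powr (\<beta> - 1) * v (x n - r) = F (x n) r"
          using order_tendstoD(1)[OF xa True] r unfolding F_def by (auto elim!: eventually_mono)
        have "(\<lambda>n. r powr (\<beta> - 1) * v (x n - r)) \<longlonglongrightarrow> r powr (\<beta> - 1) * v (a - r)"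
        proof (intro tendsto_intros)
          have "isCont v (a - r)" using cv continuous_on_eq_continuous_at by blast
          then show "(\<lambda>n. v (x n - r)) \<longlonglongrightarrow> v (a - r)"
          proof (rule isCont_tendsto_compose[of "a - r" v "\<lambda>n. x n - r"])
            show "(\<lambda>n. x n - r) \<longlonglongrightarrow> a - r" using xa by (intro tendsto_intros)
          qed
        qed
        moreover have "F a r = r powr (\<beta> - 1) * v (a - r)" using True r unfolding F_def by auto
        ultimately have "(\<lambda>n. r powr (\<beta> - 1) * v (x n - r)) \<longlonglongrightarrow> F a r" by simp
        then show ?thesis by (rule Lim_transform_eventually[OF _ ev])
      next
        case False
        then have ar: "a < r" using r by auto
        have ev: "\<forall>\<^sub>F n in sequentially. 0 = F (x n) r"
          using order_tendstoD(2)[OF xa ar] unfolding F_def by (auto elim!: eventually_mono)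
        moreover have "F a r = 0" using ar unfolding F_def by auto
        moreover have "(\<lambda>n. 0::real) \<longlonglongrightarrow> 0" by simp
        ultimately show ?thesis using Lim_transform_eventually[of "\<lambda>n. 0::real" 0 sequentially "\<lambda>n. F (x n) r"] by simp
      qed
    qed
    moreover have "integral ?S (F (x n)) = Kf \<beta> u (x n)" for n
      using spike_pt[OF Fint[OF xS[rule_format, of n]]] Keq[OF xS[rule_format, of n]] by simp
    moreover have "integral ?S (F a) = Kf \<beta> u a"
      using spike_pt[OF Fint[OF aS]] Keq[OF aS] by simp
    ultimately show "(\<lambda>n. Kf \<beta> u (x n)) \<longlonglongrightarrow> Kf \<beta> u a"
      by simp
  qed
qed




lemma Gamma_plus1_pos:
  fixes \<beta> :: real assumes "\<beta> > 0" shows "Gamma (\<beta> + 1) = \<beta> * Gamma \<beta>"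
proof (rule Gamma_plus1)
  show "\<beta> \<notin> \<int>\<^sub>\<le>\<^sub>0" using assms nonpos_Ints_nonpos by force
qed

lemma RL_0: "RL_int 0 u = u"
  by (simp add: fun_eq_iff RL_int_def)

lemma J_local:
  fixes u v :: "real \<Rightarrow> real" and t \<beta> :: real
  assumes "\<forall>s\<in>{0..t}. u s = v s" "0 \<le> t"
  shows "RL_int \<beta> u t = RL_int \<beta> v t"
proof -
  have "integral {0..t} (\<lambda>s. (t - s) powr (\<beta> - 1) * u s) = integral {0..t} (\<lambda>s. (t - s) powr (\<beta> - 1) * v s)"
    by (rule integral_cong) (use assms in auto)
  then show ?thesis using assms unfolding RL_int_def by auto
qed

lemma J_cont:
  fixes u :: "real \<Rightarrow> real" and h \<beta> :: real
  assumes b: "\<beta> \<ge> 0" and u: "continuous_on {0..h} u"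
  shows "continuous_on {0..h} (RL_int \<beta> u)"
proof (cases "\<beta> = 0")
  case True then show ?thesis using u by (simp add: RL_0)
next
  case False
  then have b': "\<beta> > 0" using b by simp
  have "continuous_on {0..h} (\<lambda>t. Kf \<beta> u t / Gamma \<beta>)"
    using K_cont[OF b' u] Gamma_real_pos[OF b'] by (intro continuous_intros) auto
  then show ?thesis
    by (rule continuous_on_eq) (use K_RL[OF b' u] in auto)
qed

lemma J_diff:
  fixes u v :: "real \<Rightarrow> real" and t h \<beta> :: real
  assumes b: "\<beta> \<ge> 0" and u: "continuous_on {0..h} u" and v: "continuous_on {0..h} v" and t: "t \<in> {0..h}"
  shows "RL_int \<beta> u t - RL_int \<beta> v t = RL_int \<beta> (\<lambda>s. u s - v s) t"
proof (cases "\<beta> = 0")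
  case True then show ?thesis by (simp add: RL_0)
next
  case False
  then have b': "\<beta> > 0" using b by simp
  have uv: "continuous_on {0..h} (\<lambda>s. u s - v s)" using u v by (intro continuous_intros)
  show ?thesis
    unfolding K_RL[OF b' u t] K_RL[OF b' v t] K_RL[OF b' uv t] K_diff[OF b' u v t, symmetric]
    by (simp add: diff_divide_distrib)
qed

lemma J_bound:
  fixes u :: "real \<Rightarrow> real" and t h \<beta> e H :: real
  assumes b: "\<beta> \<ge> 0" and u: "continuous_on {0..h} u" and t: "t \<in> {0..h}"
    and H: "0 < H" "t \<le> H" and e: "\<forall>s\<in>{0..t}. \<bar>u s\<bar> \<le> e"
  shows "\<bar>RL_int \<beta> u t\<bar> \<le> e * H powr \<beta> / Gamma (\<beta> + 1)"
proof (cases "\<beta> = 0")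
  case True then show ?thesis using e t H by (simp add: RL_0)
next
  case False
  then have b': "\<beta> > 0" using b by simp
  have e0: "0 \<le> e" using e t by force
  have G: "Gamma \<beta> > 0" using b' by simp
  have "\<bar>RL_int \<beta> u t\<bar> = \<bar>Kf \<beta> u t\<bar> / Gamma \<beta>"
    using K_RL[OF b' u t] G by simp
  also have "\<dots> \<le> e * (t powr \<beta> / \<beta>) / Gamma \<beta>"
    by (rule divide_right_mono[OF K_bound[OF b' u t e]]) (use G in simp)
  also have "\<dots> = e * t powr \<beta> / Gamma (\<beta> + 1)"
    using Gamma_plus1_pos[OF b'] by simp
  also have "\<dots> \<le> e * H powr \<beta> / Gamma (\<beta> + 1)"
  proof -
    have "t powr \<beta> \<le> H powr \<beta>" using t H b' by (intro powr_mono2) auto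
    moreover have "Gamma (\<beta> + 1) > 0" using b' by simp
    ultimately show ?thesis using e0 by (intro divide_right_mono mult_left_mono) auto
  qed
  finally show ?thesis .
qed




lemma lip_max: "\<bar>max 0 (t - \<delta>) - max 0 (s - \<delta>)\<bar> \<le> \<bar>t - s\<bar>" for t s \<delta> :: real
  by (simp add: max_def abs_if)

lemma iint_lip_abs:
  assumes "continuous_on {0..h} g" "\<forall>s\<in>{0..h}. \<bar>g s\<bar> \<le> M"
    and "x \<in> {0..h}" "y \<in> {0..h}"
  shows "\<bar>iint (Suc k) g x - iint (Suc k) g y\<bar> \<le> M * h ^ k / fact k * \<bar>x - y\<bar>"
proof (cases "y \<le> x")
  case True
  then show ?thesis using iint_lip[OF assms(1,2), of y x k] assms by auto
next
  case False
  then show ?thesis using iint_lip[OF assms(1,2), of x y k] assms by (auto simp: abs_minus_commute)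
qed

lemma iint_bound:
  assumes "continuous_on {0..h} g" "\<forall>s\<in>{0..h}. \<bar>g s\<bar> \<le> M" "x \<in> {0..h}"
  shows "\<bar>iint k g x\<bar> \<le> M * h ^ k / fact k"
proof -
  have "\<bar>iint k g x - iint k (\<lambda>_. 0) x\<bar> \<le> M * x ^ k / fact k"
    by (rule iint_diff_bound[of h]) (use assms in auto)
  moreover have "M * x ^ k / fact k \<le> M * h ^ k / fact k"
  proof -
    have "0 \<le> M" using assms by force
    then show ?thesis using assms by (auto intro!: divide_right_mono mult_left_mono power_mono)
  qed
  ultimately show ?thesis by (simp add: iint_zero_fun)
qed


locale volt =
  fixes f :: "real \<Rightarrow> real \<Rightarrow> real" and P :: "real \<Rightarrow> real"
    and \<beta> h H B M :: real and p :: nat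
  assumes b: "\<beta> \<ge> 0" and h: "0 < h" and hH: "h \<le> H" and p: "1 \<le> p" and M0: "0 \<le> M"
    and P: "continuous_on {0..h} P"
    and f: "continuous_on ({0..h} \<times> UNIV) (\<lambda>(t, v). f t v)"
    and fM: "\<And>t v. t \<in> {0..h} \<Longrightarrow> \<bar>v\<bar> \<le> B * H powr \<beta> / Gamma (\<beta> + 1) \<Longrightarrow> \<bar>f t v\<bar> \<le> M"
    and PB: "\<And>t. t \<in> {0..h} \<Longrightarrow> \<bar>P t\<bar> + M * h ^ p / fact p \<le> B"
begin

definition "CC = B * H powr \<beta> / Gamma (\<beta> + 1)"
definition "gg u s = f s (RL_int \<beta> u s)"
definition "TT \<delta> u t = P t + iint p (gg u) (max 0 (t - \<delta>))"
definition "Inv u \<longleftrightarrow> continuous_on {0..h} u \<and> (\<forall>t\<in>{0..h}. \<bar>u t\<bar> \<le> B)"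
definition "LL = M * h ^ (p - 1) / fact (p - 1)"

lemma H0: "0 < H" using h hH by simp

lemma B0: "0 \<le> B"
proof -
  have "0 \<le> M * h ^ p / fact p" using M0 h by simp
  then show ?thesis using PB[of 0] h by simp
qed

lemma C0: "0 \<le> CC"
  unfolding CC_def using B0 b by (simp add: Gamma_real_pos)

lemma L0: "0 \<le> LL"
  unfolding LL_def using M0 h by simp

lemma Inv_P: "Inv P"
  unfolding Inv_def
proof (intro conjI ballI)
  show "continuous_on {0..h} P" by (rule P)
  fix t assume t: "t \<in> {0..h}"
  have "0 \<le> M * h ^ p / fact p" using M0 h by simp
  then show "\<bar>P t\<bar> \<le> B" using PB[OF t] by simp
qed

lemma J_C:
  assumes "Inv u" "s \<in> {0..h}"
  shows "\<bar>RL_int \<beta> u s\<bar> \<le> CC"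
  unfolding CC_def
  by (rule J_bound[OF b]) (use assms hH H0 in \<open>auto simp: Inv_def\<close>)

lemma g_cont:
  assumes "Inv u"
  shows "continuous_on {0..h} (gg u)"
proof -
  have cJ: "continuous_on {0..h} (RL_int \<beta> u)" using J_cont[OF b] assms by (simp add: Inv_def)
  have "continuous_on {0..h} (\<lambda>s. (\<lambda>(t, v). f t v) (s, RL_int \<beta> u s))"
    by (rule continuous_on_compose2[OF f]) (use cJ in \<open>auto intro!: continuous_intros\<close>)
  then show ?thesis unfolding gg_def by simp
qed

lemma g_bound:
  assumes "Inv u" "s \<in> {0..h}"
  shows "\<bar>gg u s\<bar> \<le> M"
  unfolding gg_def by (rule fM[OF assms(2)]) (use J_C[OF assms] in \<open>simp add: CC_def\<close>)

lemma T_inv: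
  assumes u: "Inv u" and d: "0 \<le> \<delta>"
  shows "Inv (TT \<delta> u)"
  unfolding Inv_def
proof (intro conjI ballI)
  have ci: "continuous_on {0..h} (iint p (gg u))"
    using iint_props[OF g_cont[OF u]] by blast
  have "continuous_on {0..h} (\<lambda>t. iint p (gg u) (max 0 (t - \<delta>)))"
    by (rule continuous_on_compose2[OF ci]) (use d h in \<open>auto intro!: continuous_intros\<close>)
  then show "continuous_on {0..h} (TT \<delta> u)"
    unfolding TT_def[abs_def] using P by (intro continuous_intros)
  fix t assume t: "t \<in> {0..h}"
  have x: "max 0 (t - \<delta>) \<in> {0..h}" using t d by auto
  have "\<bar>iint p (gg u) (max 0 (t - \<delta>))\<bar> \<le> M * h ^ p / fact p"
    by (rule iint_bound[OF g_cont[OF u] _ x]) (use g_bound[OF u] in auto)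
  then show "\<bar>TT \<delta> u t\<bar> \<le> B" using PB[OF t] unfolding TT_def by linarith
qed

lemma T_local:
  assumes u: "Inv u" and v: "Inv v" and uv: "\<forall>s\<in>{0..h}. s \<le> a \<longrightarrow> u s = v s"
    and t: "t \<in> {0..h}" "t \<le> a + \<delta>" and d: "0 \<le> \<delta>" and a: "0 \<le> a"
  shows "TT \<delta> u t = TT \<delta> v t"
proof -
  let ?x = "max 0 (t - \<delta>)"
  have gs: "\<forall>s\<in>{0..?x}. gg u s = gg v s"
  proof
    fix s assume s: "s \<in> {0..?x}"
    then have "s \<le> h" "s \<le> a" "0 \<le> s" using t d a by auto
    then have "RL_int \<beta> u s = RL_int \<beta> v s"
      by (intro J_local) (use uv in auto)
    then show "gg u s = gg v s" by (simp add: gg_def)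
  qed
  have "iint p (gg u) ?x = iint p (gg v) ?x"
    by (rule iint_local[OF gs]) simp
  then show ?thesis by (simp add: TT_def)
qed

lemma T_lip:
  assumes u: "Inv u" and d: "0 \<le> \<delta>" and s: "s \<in> {0..h}" and t: "t \<in> {0..h}"
  shows "\<bar>TT \<delta> u t - TT \<delta> u s\<bar> \<le> \<bar>P t - P s\<bar> + LL * \<bar>t - s\<bar>"
proof -
  obtain k where k: "p = Suc k" using p by (cases p) auto
  have xs: "max 0 (s - \<delta>) \<in> {0..h}" "max 0 (t - \<delta>) \<in> {0..h}" using s t d by auto
  have "\<bar>iint p (gg u) (max 0 (t - \<delta>)) - iint p (gg u) (max 0 (s - \<delta>))\<bar>
        \<le> M * h ^ k / fact k * \<bar>max 0 (t - \<delta>) - max 0 (s - \<delta>)\<bar>"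
    unfolding k by (rule iint_lip_abs[OF g_cont[OF u] _ xs(2) xs(1)]) (use g_bound[OF u] in auto)
  also have "\<dots> \<le> LL * \<bar>t - s\<bar>"
    unfolding LL_def unfolding k using lip_max[of t \<delta> s] M0 h
    by (simp add: mult_left_mono divide_right_mono mult.assoc)
  finally show ?thesis unfolding TT_def by linarith
qed

lemma approx:
  assumes d: "0 < \<delta>" and hd: "h \<le> real (Suc N) * \<delta>"
  shows "\<exists>w. Inv w \<and> (\<forall>t\<in>{0..h}. w t = TT \<delta> w t)"
proof -
  define W where "W j = (TT \<delta> ^^ j) P" for j
  have WS: "W (Suc j) = TT \<delta> (W j)" for j by (simp add: W_def)
  have WI: "Inv (W j)" for j
  proof (induction j)
    case 0 then show ?case by (simp add: W_def Inv_P)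
  next
    case (Suc j) then show ?case unfolding WS using T_inv d by simp
  qed
  obtain k where k: "p = Suc k" using p by (cases p) auto
  have stab: "\<forall>t\<in>{0..h}. t \<le> real j * \<delta> \<longrightarrow> W (Suc j) t = W j t" for j
  proof (induction j)
    case 0
    show ?case
    proof (intro ballI impI)
      fix t assume t: "t \<in> {0..h}" "t \<le> real 0 * \<delta>"
      then have t0: "t = 0" by auto
      have "max 0 (0 - \<delta>) = 0" using d by simp
      then show "W (Suc 0) t = W 0 t" unfolding t0 WS TT_def by (simp add: W_def k)
    qed
  next
    case (Suc j)
    show ?case
    proof (intro ballI impI)
      fix t assume t: "t \<in> {0..h}" "t \<le> real (Suc j) * \<delta>"
      have "TT \<delta> (W (Suc j)) t = TT \<delta> (W j) t"
      proof (rule T_local[OF WI WI _ t(1), of "real j * \<delta>"])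
        show "\<forall>s\<in>{0..h}. s \<le> real j * \<delta> \<longrightarrow> W (Suc j) s = W j s" using Suc.IH .
        show "t \<le> real j * \<delta> + \<delta>" using t by (simp add: algebra_simps)
      qed (use d in auto)
      then show "W (Suc (Suc j)) t = W (Suc j) t" by (simp only: WS)
    qed
  qed
  show ?thesis
  proof (intro exI conjI ballI)
    show "Inv (W (Suc N))" by (rule WI)
    fix t assume t: "t \<in> {0..h}"
    then have "W (Suc (Suc N)) t = W (Suc N) t" using stab[of "Suc N"] hd by auto
    then show "W (Suc N) t = TT \<delta> (W (Suc N)) t" by (simp only: WS)
  qed
qed

lemma equicont:
  assumes ws: "\<And>N. Inv (ws N)" "\<And>N t. t \<in> {0..h} \<Longrightarrow> ws N t = TT (h / real (Suc N)) (ws N) t"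
    and x: "x \<in> {0..h}" and e: "0 < e"
  shows "\<exists>d. 0 < d \<and> (\<forall>n y. y \<in> {0..h} \<and> norm (x - y) < d \<longrightarrow> norm (ws n x - ws n y) < e)"
proof -
  obtain d1 where d1: "d1 > 0" "\<forall>y\<in>{0..h}. dist y x < d1 \<longrightarrow> dist (P y) (P x) < e / 2"
    using P x e unfolding continuous_on_iff by (metis half_gt_zero)
  define d where "d = min d1 (e / (2 * (LL + 1)))"
  have L0': "0 \<le> LL" by (rule L0)
  have d0: "0 < d" unfolding d_def using d1 e L0' by simp
  show ?thesis
  proof (intro exI conjI allI impI)
    show "0 < d" by (rule d0)
    fix n y assume y: "y \<in> {0..h} \<and> norm (x - y) < d"
    have dlt: "\<bar>y - x\<bar> < d1" using y unfolding d_def by (simp add: abs_minus_commute)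
    have yS: "y \<in> {0..h}" using y by simp
    then have "dist (P y) (P x) < e / 2" using d1(2) dlt by (simp add: dist_real_def)
    then have "\<bar>P x - P y\<bar> < e / 2" by (simp add: dist_real_def abs_minus_commute)
    moreover have "LL * \<bar>x - y\<bar> \<le> LL * (e / (2 * (LL + 1)))"
      using y L0' unfolding d_def by (intro mult_left_mono) auto
    moreover have "LL * (e / (2 * (LL + 1))) \<le> e / 2"
    proof -
      have "LL * (e / (2 * (LL + 1))) = (e / 2) * (LL / (LL + 1))" using L0' by (simp add: field_simps)
      also have "\<dots> \<le> (e / 2) * 1" using L0' e by (intro mult_left_mono) auto
      finally show ?thesis by simp
    qed
    moreover have "\<bar>TT (h / real (Suc n)) (ws n) x - TT (h / real (Suc n)) (ws n) y\<bar> \<le> \<bar>P x - P y\<bar> + LL * \<bar>x - y\<bar>"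
      by (rule T_lip[OF ws(1)]) (use h x y in auto)
    ultimately have lt: "\<bar>TT (h / real (Suc n)) (ws n) x - TT (h / real (Suc n)) (ws n) y\<bar> < e"
      by linarith
    have "ws n x - ws n y = TT (h / real (Suc n)) (ws n) x - TT (h / real (Suc n)) (ws n) y"
      using ws(2)[OF x, of n] ws(2)[OF yS, of n] by linarith
    then show "norm (ws n x - ws n y) < e" using lt by simp
  qed
qed

lemma exists_sol:
  "\<exists>w. Inv w \<and> (\<forall>t\<in>{0..h}. w t = P t + iint p (gg w) t)"
proof -
  have "\<forall>N. \<exists>w. Inv w \<and> (\<forall>t\<in>{0..h}. w t = TT (h / real (Suc N)) w t)"
  proof
    fix N
    show "\<exists>w. Inv w \<and> (\<forall>t\<in>{0..h}. w t = TT (h / real (Suc N)) w t)"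
      by (rule approx[of _ N]) (use h in auto)
  qed
  then obtain ws where ws1: "\<And>N. Inv (ws N)"
    and ws2: "\<And>N t. t \<in> {0..h} \<Longrightarrow> ws N t = TT (h / real (Suc N)) (ws N) t"
    by metis
  obtain z r where zc: "continuous_on {0..h} z" and r: "strict_mono (r :: nat \<Rightarrow> nat)"
    and conv: "\<And>e. 0 < e \<Longrightarrow> \<exists>N. \<forall>n x. n \<ge> N \<and> x \<in> {0..h} \<longrightarrow> norm (ws (r n) x - z x) < e"
  proof (rule Arzela_Ascoli[of "{0..h}" ws B])
    show "compact {0..h::real}" by simp
    show "norm (ws n x) \<le> B" if "x \<in> {0..h}" for n x using ws1[of n] that by (simp add: Inv_def)
    show "\<exists>d>0. \<forall>n y. y \<in> {0..h} \<and> norm (x - y) < d \<longrightarrow> norm (ws n x - ws n y) < e"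
      if "x \<in> {0..h}" "0 < e" for x e
      using equicont[OF ws1 ws2 that] by blast
  qed blast
  have zB: "\<bar>z t\<bar> \<le> B" if t: "t \<in> {0..h}" for t
  proof (rule field_le_epsilon)
    fix e :: real assume e: "0 < e"
    obtain N where "\<forall>n x. n \<ge> N \<and> x \<in> {0..h} \<longrightarrow> norm (ws (r n) x - z x) < e" using conv[OF e] by blast
    then have "\<bar>ws (r N) t - z t\<bar> < e" using t by auto
    moreover have "\<bar>ws (r N) t\<bar> \<le> B" using ws1[of "r N"] t by (simp add: Inv_def)
    ultimately show "\<bar>z t\<bar> \<le> B + e" by linarith
  qed
  have zI: "Inv z" unfolding Inv_def using zc zB by blast
  obtain k where k: "p = Suc k" using p by (cases p) auto
  have LLk: "LL = M * h ^ k / fact k" unfolding LL_def using k by simp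
  define K where "K = {0..h} \<times> {-CC..CC}"
  have Kc: "compact K" unfolding K_def by (intro compact_Times compact_Icc)
  have fK: "continuous_on K (\<lambda>(t, v). f t v)"
    by (rule continuous_on_subset[OF f]) (auto simp: K_def)
  have uc: "uniformly_continuous_on K (\<lambda>(t, v). f t v)"
    by (rule compact_uniformly_continuous[OF fK Kc])
  define Cg where "Cg = H powr \<beta> / Gamma (\<beta> + 1)"
  have Cg0: "0 \<le> Cg" unfolding Cg_def using b by (simp add: Gamma_real_pos)
  show ?thesis
  proof (intro exI conjI ballI)
    show "Inv z" by (rule zI)
    fix t assume t: "t \<in> {0..h}"
    have "\<bar>z t - (P t + iint p (gg z) t)\<bar> \<le> 0"
    proof (rule field_le_epsilon)
      fix e :: real assume e: "0 < e"
      define hp where "hp = h ^ p / fact p"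
      have hp0: "0 \<le> hp" unfolding hp_def using h by simp
      define e1 where "e1 = e / (3 * (hp + 1))"
      have e1: "0 < e1" unfolding e1_def using e hp0 by simp
      obtain d where d: "d > 0"
        and dK: "\<forall>x\<in>K. \<forall>x'\<in>K. dist x' x < d \<longrightarrow> dist ((\<lambda>(t, v). f t v) x') ((\<lambda>(t, v). f t v) x) < e1"
        using uc e1 unfolding uniformly_continuous_on_def by metis
      define \<eta> where "\<eta> = min (e / 3) (d / (Cg + 1))"
      have \<eta>0: "0 < \<eta>" unfolding \<eta>_def using e d Cg0 by simp
      obtain N1 where N1: "\<forall>n x. n \<ge> N1 \<and> x \<in> {0..h} \<longrightarrow> norm (ws (r n) x - z x) < \<eta>"
        using conv[OF \<eta>0] by blast
      obtain N2 :: nat where N2: "LL * h * 3 / e < real N2" using reals_Archimedean2 by blast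
      define n where "n = max N1 N2"
      define m where "m = r n"
      define w where "w = ws m"
      define \<delta> where "\<delta> = h / real (Suc m)"
      have wI: "Inv w" unfolding w_def by (rule ws1)
      have mn: "n \<le> m" unfolding m_def using r by (simp add: seq_suble)
      have wz: "\<bar>w x - z x\<bar> < \<eta>" if "x \<in> {0..h}" for x
        using N1 that unfolding w_def m_def n_def by auto
      have A: "\<bar>z t - w t\<bar> < e / 3" using wz[OF t] unfolding \<eta>_def by (auto simp: abs_minus_commute)
      have d0: "0 \<le> \<delta>" unfolding \<delta>_def using h by simp
      have wt: "w t = P t + iint p (gg w) (max 0 (t - \<delta>))"
        using ws2[OF t, of m] unfolding w_def \<delta>_def TT_def by simp
      have xS: "max 0 (t - \<delta>) \<in> {0..h}" using t d0 by auto
      have "\<bar>iint p (gg w) (max 0 (t - \<delta>)) - iint p (gg w) t\<bar> \<le> M * h ^ k / fact k * \<bar>max 0 (t - \<delta>) - t\<bar>"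
        unfolding k by (rule iint_lip_abs[OF g_cont[OF wI] _ xS t]) (use g_bound[OF wI] in auto)
      also have "\<dots> \<le> LL * \<delta>"
      proof -
        have "\<bar>max 0 (t - \<delta>) - t\<bar> \<le> \<delta>" using t d0 by auto
        then show ?thesis using mult_left_mono[OF _ L0] unfolding LLk by blast
      qed
      also have "\<dots> < e / 3"
      proof -
        have "LL * \<delta> \<le> LL * (h / real (Suc N2))"
        proof (rule mult_left_mono[OF _ L0])
          have "real (Suc N2) \<le> real (Suc m)" using mn unfolding n_def by simp
          then show "\<delta> \<le> h / real (Suc N2)" unfolding \<delta>_def using h by (intro divide_left_mono) auto
        qed
        also have "\<dots> < e / 3"
        proof -
          have "LL * h * 3 < e * real N2" using N2 e by (simp add: field_simps)
          moreover have "e * real N2 \<le> e * real (Suc N2)" using e by simp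
          ultimately have "LL * h * 3 < e * real (Suc N2)" by linarith
          then have "LL * h < e / 3 * real (Suc N2)" by simp
          then show ?thesis using pos_divide_less_eq[of "real (Suc N2)" "LL * h" "e / 3"] by simp
        qed
        finally show ?thesis .
      qed
      finally have B: "\<bar>iint p (gg w) (max 0 (t - \<delta>)) - iint p (gg w) t\<bar> < e / 3" .
      have gdiff: "\<forall>s\<in>{0..h}. \<bar>gg w s - gg z s\<bar> \<le> e1"
      proof
        fix s assume s: "s \<in> {0..h}"
        have wzc: "continuous_on {0..h} w" "continuous_on {0..h} z" using wI zI by (auto simp: Inv_def)
        have "\<bar>RL_int \<beta> (\<lambda>x. w x - z x) s\<bar> \<le> \<eta> * H powr \<beta> / Gamma (\<beta> + 1)"
        proof (rule J_bound[OF b _ s H0])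
          show "continuous_on {0..h} (\<lambda>x. w x - z x)" using wzc by (intro continuous_intros)
          show "s \<le> H" using s hH by auto
          show "\<forall>x\<in>{0..s}. \<bar>w x - z x\<bar> \<le> \<eta>" using wz s by (auto intro: less_imp_le)
        qed
        then have "\<bar>RL_int \<beta> w s - RL_int \<beta> z s\<bar> \<le> \<eta> * Cg"
          using J_diff[OF b wzc s] unfolding Cg_def by simp
        also have "\<dots> \<le> d / (Cg + 1) * Cg" unfolding \<eta>_def using Cg0 by (intro mult_right_mono) auto
        also have "\<dots> < d"
        proof -
          have "d / (Cg + 1) * Cg = d * (Cg / (Cg + 1))" by simp
          also have "\<dots> < d * 1" using d Cg0 by (intro mult_strict_left_mono) auto
          finally show ?thesis by simp
        qed
        finally have dl: "\<bar>RL_int \<beta> w s - RL_int \<beta> z s\<bar> < d" .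
        have inK: "(s, RL_int \<beta> w s) \<in> K" "(s, RL_int \<beta> z s) \<in> K"
          using J_C[OF wI s] J_C[OF zI s] s unfolding K_def by auto
        have "dist (s, RL_int \<beta> w s) (s, RL_int \<beta> z s) < d"
          using dl by (simp add: dist_Pair_Pair dist_real_def)
        then have "dist (f s (RL_int \<beta> w s)) (f s (RL_int \<beta> z s)) < e1"
          using dK inK by fastforce
        then show "\<bar>gg w s - gg z s\<bar> \<le> e1" unfolding gg_def dist_real_def by simp
      qed
      have "\<bar>iint p (gg w) t - iint p (gg z) t\<bar> \<le> e1 * t ^ p / fact p"
        by (rule iint_diff_bound[OF g_cont[OF wI] g_cont[OF zI] gdiff t])
      also have "\<dots> \<le> e1 * hp"
      proof -
        have "t ^ p / fact p \<le> h ^ p / fact p" using t by (intro divide_right_mono power_mono) auto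
        then have "e1 * (t ^ p / fact p) \<le> e1 * hp" unfolding hp_def using e1 by (intro mult_left_mono) auto
        then show ?thesis by simp
      qed
      also have "\<dots> < e / 3"
      proof -
        have "e1 * hp = (e / 3) * (hp / (hp + 1))" unfolding e1_def using hp0 by (simp add: field_simps)
        also have "\<dots> < (e / 3) * 1" using e hp0 by (intro mult_strict_left_mono) auto
        finally show ?thesis by simp
      qed
      finally have C: "\<bar>iint p (gg w) t - iint p (gg z) t\<bar> < e / 3" .
      show "\<bar>z t - (P t + iint p (gg z) t)\<bar> \<le> 0 + e"
        using A B C wt by linarith
    qed
    then show "z t = P t + iint p (gg z) t" by simp
  qed
qed

end




lemma poly_deriv:
  "((\<lambda>t. \<Sum>i<Suc q. c i * t ^ i / fact i) has_real_derivative (\<Sum>i<q. c (Suc i) * x ^ i / fact i)) (at x within S)"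
proof (induction q)
  case 0
  show ?case by simp
next
  case (Suc q)
  have d1: "((\<lambda>t. c (Suc q) * t ^ Suc q / fact (Suc q)) has_real_derivative c (Suc q) * x ^ q / fact q) (at x within S)"
  proof -
    have "((\<lambda>t. c (Suc q) * t ^ Suc q / fact (Suc q)) has_real_derivative c (Suc q) * (real (Suc q) * x ^ q) / fact (Suc q)) (at x within S)"
      using DERIV_cdivide[OF DERIV_cmult[OF DERIV_pow[of "Suc q" x S], of "c (Suc q)"], of "fact (Suc q)"] by simp
    moreover have "c (Suc q) * (real (Suc q) * x ^ q) / fact (Suc q) = c (Suc q) * x ^ q / fact q"
    proof -
      have f: "(fact (Suc q)::real) = real (Suc q) * fact q" by simp
      have "c (Suc q) * (real (Suc q) * x ^ q) / fact (Suc q) = (real (Suc q) * (c (Suc q) * x ^ q)) / (real (Suc q) * fact q)"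
        unfolding f by (simp add: algebra_simps)
      also have "\<dots> = c (Suc q) * x ^ q / fact q" by (rule mult_divide_mult_cancel_left) simp
      finally show ?thesis .
    qed
    ultimately show ?thesis by simp
  qed
  have "((\<lambda>t. (\<Sum>i<Suc q. c i * t ^ i / fact i) + c (Suc q) * t ^ Suc q / fact (Suc q)) has_real_derivative
         (\<Sum>i<q. c (Suc i) * x ^ i / fact i) + c (Suc q) * x ^ q / fact q) (at x within S)"
    by (rule DERIV_add[OF Suc.IH d1])
  then show ?case by (simp add: sum.lessThan_Suc)
qed

theorem theorem3p3:
  fixes k I \<alpha>1 :: real and n :: nat and u0 :: "nat \<Rightarrow> real"
    and f :: "real \<Rightarrow> real \<Rightarrow> real"
  assumes k_pos: "k > 0" and I_pos: "I > 0"
    and a1_nonneg: "\<alpha>1 \<ge> 0"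
    and a1_not_nat: "\<forall>j::nat. j \<ge> 1 \<longrightarrow> \<alpha>1 \<noteq> real j"
    and a2_gt: "real n > \<alpha>1"
    and ceil_le: "\<lceil>\<alpha>1\<rceil> + 1 \<le> int n"
    and f_cont: "continuous_on ({0..I} \<times> UNIV) (\<lambda>(t, v). f t v)"
  defines "m \<equiv> nat \<lceil>\<alpha>1\<rceil>"
  defines "G \<equiv> {(t, v). t \<in> {0..I} \<and>
              \<bar>v\<bar> \<le> I powr (real m - \<alpha>1) / Gamma (real m - \<alpha>1 + 1) *
                     (k + (\<Sum>i = 0..n - m - 1. I ^ i / fact i * \<bar>u0 (i + m)\<bar>))}"
  defines "M \<equiv> Sup ((\<lambda>(t, v). \<bar>f t v\<bar>) ` G)"
  defines "h \<equiv> (if M = 0 then I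
               else min I ((k * Gamma (real n - real m + 1) / M) powr (1 / (real n - real m))))"
  shows "\<exists>U. Cn_on n h U
             \<and> (\<forall>i<n. U i 0 = u0 i)
             \<and> (\<forall>t\<in>{0..h}. caputo (real n) U t = f t (caputo \<alpha>1 U t))"
  proof -
  have c0: "0 \<le> \<lceil>\<alpha>1\<rceil>" using a1_nonneg by simp
  have mreal: "real m = of_int \<lceil>\<alpha>1\<rceil>" unfolding m_def using c0 by simp
  define \<beta> where "\<beta> = real m - \<alpha>1"
  have b: "\<beta> \<ge> 0" unfolding \<beta>_def mreal by simp
  define p where "p = n - m"
  have mn: "m + 1 \<le> n" using ceil_le c0 unfolding m_def by linarith
  have p1: "1 \<le> p" unfolding p_def using mn by simp
  have npm: "n = m + p" unfolding p_def using mn by simp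
  define B where "B = k + (\<Sum>i = 0..n - m - 1. I ^ i / fact i * \<bar>u0 (i + m)\<bar>)"
  have sumset: "{0..n - m - 1} = {..<p}" unfolding p_def using mn by auto
  have Bsum: "B = k + (\<Sum>i<p. I ^ i / fact i * \<bar>u0 (i + m)\<bar>)" unfolding B_def sumset ..
  have Bpos: "0 < B" unfolding Bsum using k_pos I_pos by (intro add_pos_nonneg sum_nonneg) auto
  define C where "C = B * I powr \<beta> / Gamma (\<beta> + 1)"
  have C0: "0 \<le> C" unfolding C_def using Bpos b by (simp add: Gamma_real_pos)
  have Geq: "G = {0..I} \<times> {-C..C}"
    unfolding G_def C_def B_def \<beta>_def by (auto simp: mult.commute)
  have Gc: "compact G" unfolding Geq by (intro compact_Times compact_Icc)
  have fG: "continuous_on G (\<lambda>(t, v). \<bar>f t v\<bar>)"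
  proof -
    have "continuous_on G (\<lambda>(t, v). f t v)" by (rule continuous_on_subset[OF f_cont]) (auto simp: Geq)
    then have "continuous_on G (\<lambda>x. \<bar>(\<lambda>(t, v). f t v) x\<bar>)" by (intro continuous_intros)
    then show ?thesis by (simp add: case_prod_unfold)
  qed
  have bdd: "bdd_above ((\<lambda>(t, v). \<bar>f t v\<bar>) ` G)"
    by (rule bounded_imp_bdd_above, rule compact_imp_bounded, rule compact_continuous_image[OF fG Gc])
  have fM: "\<bar>f t v\<bar> \<le> M" if "(t, v) \<in> G" for t v
    unfolding M_def using cSup_upper[OF _ bdd, of "\<bar>f t v\<bar>"] that by force
  have M0: "0 \<le> M"
  proof -
    have "(0, 0) \<in> G" unfolding Geq using C0 I_pos by auto
    then show ?thesis using fM[of 0 0] by simp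
  qed
  have Gp: "Gamma (real n - real m + 1) = fact p"
  proof -
    have "real n - real m + 1 = 1 + real p" unfolding npm by simp
    then show ?thesis using Gamma_fact[of p] by (simp add: add.commute)
  qed
  have h0: "0 < h" and hI: "h \<le> I"
  proof -
    have "0 < h \<and> h \<le> I"
    proof (cases "M = 0")
      case True then show ?thesis unfolding h_def using I_pos by simp
    next
      case False
      then have "0 < M" using M0 by simp
      then have "0 < (k * Gamma (real n - real m + 1) / M) powr (1 / (real n - real m))"
        using k_pos Gp by simp
      then show ?thesis unfolding h_def using False I_pos by simp
    qed
    then show "0 < h" "h \<le> I" by auto
  qed
  have Mh: "M * h ^ p / fact p \<le> k"
  proof (cases "M = 0")
    case True then show ?thesis using k_pos by simp
  next
    case False
    then have M1: "0 < M" using M0 by simp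
    define X where "X = k * fact p / M"
    have X0: "0 < X" unfolding X_def using k_pos M1 by simp
    have pp: "real n - real m = real p" unfolding npm by simp
    have "h \<le> X powr (1 / real p)" unfolding h_def X_def using False Gp pp by simp
    then have "h ^ p \<le> (X powr (1 / real p)) ^ p" using h0 by (intro power_mono) auto
    also have "\<dots> = X"
    proof -
      have "(X powr (1 / real p)) ^ p = (X powr (1 / real p)) powr real p"
        using X0 by (simp add: powr_realpow)
      also have "\<dots> = X" using X0 p1 by (simp add: powr_powr)
      finally show ?thesis .
    qed
    finally have "h ^ p \<le> X" .
    then have "M * h ^ p \<le> M * X" using M1 by simp
    also have "M * X = k * fact p" unfolding X_def using M1 by simp
    finally show ?thesis by (simp add: divide_le_eq)
  qed
  define P where "P t = (\<Sum>i<p. u0 (m + i) * t ^ i / fact i)" for t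
  have Pc: "continuous_on {0..h} P" unfolding P_def[abs_def] by (intro continuous_intros) auto
  have PB: "\<bar>P t\<bar> + M * h ^ p / fact p \<le> B" if t: "t \<in> {0..h}" for t
  proof -
    have "\<bar>P t\<bar> \<le> (\<Sum>i<p. \<bar>u0 (m + i) * t ^ i / fact i\<bar>)" unfolding P_def by (rule sum_abs)
    also have "\<dots> \<le> (\<Sum>i<p. I ^ i / fact i * \<bar>u0 (i + m)\<bar>)"
    proof (rule sum_mono)
      fix i assume "i \<in> {..<p}"
      have "t ^ i \<le> I ^ i" using t hI by (intro power_mono) auto
      then have "\<bar>u0 (m + i)\<bar> * t ^ i \<le> \<bar>u0 (m + i)\<bar> * I ^ i" by (intro mult_left_mono) auto
      then show "\<bar>u0 (m + i) * t ^ i / fact i\<bar> \<le> I ^ i / fact i * \<bar>u0 (i + m)\<bar>"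
        using t by (simp add: abs_mult add.commute divide_right_mono mult.commute)
    qed
    finally show ?thesis using Mh unfolding Bsum by linarith
  qed
  interpret V: volt f P \<beta> h I B M p
  proof
    show "0 \<le> \<beta>" by (rule b)
    show "0 < h" by (rule h0)
    show "h \<le> I" by (rule hI)
    show "1 \<le> p" by (rule p1)
    show "0 \<le> M" by (rule M0)
    show "continuous_on {0..h} P" by (rule Pc)
    show "continuous_on ({0..h} \<times> UNIV) (\<lambda>(t, v). f t v)"
      by (rule continuous_on_subset[OF f_cont]) (use hI in auto)
    show "\<bar>f t v\<bar> \<le> M" if "t \<in> {0..h}" "\<bar>v\<bar> \<le> B * I powr \<beta> / Gamma (\<beta> + 1)" for t v
      by (rule fM) (use that hI in \<open>auto simp: Geq C_def\<close>)
    show "\<bar>P t\<bar> + M * h ^ p / fact p \<le> B" if "t \<in> {0..h}" for t by (rule PB[OF that])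
  qed
  obtain w where wI: "V.Inv w" and wt: "\<And>t. t \<in> {0..h} \<Longrightarrow> w t = P t + iint p (V.gg w) t"
    using V.exists_sol by blast
  define g where "g = V.gg w"
  have gc: "continuous_on {0..h} g" unfolding g_def by (rule V.g_cont[OF wI])
  have wc: "continuous_on {0..h} w" using wI by (simp add: V.Inv_def)
  define U where "U j t = (if j \<le> n then (\<Sum>i<n - j. u0 (j + i) * t ^ i / fact i) + iint (n - j) g t else 0)" for j t
  have Um: "U m t = w t" if "t \<in> {0..h}" for t
    using wt[OF that] mn unfolding U_def P_def g_def p_def by simp
  have Un: "U n t = g t" for t unfolding U_def by simp
  show ?thesis
  proof (intro exI conjI allI impI ballI)
    show "Cn_on n h U"
      unfolding Cn_on_def
    proof (intro conjI allI impI ballI)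
      fix j t assume j: "j < n" and t: "t \<in> {0..h}"
      define q where "q = n - Suc j"
      have nj: "n - j = Suc q" unfolding q_def using j by simp
      have e1: "U j = (\<lambda>t. (\<Sum>i<Suc q. u0 (j + i) * t ^ i / fact i) + iint (Suc q) g t)"
        unfolding U_def nj[symmetric] using j by (simp add: fun_eq_iff)
      have e2: "U (Suc j) t = (\<Sum>i<q. u0 (j + Suc i) * t ^ i / fact i) + iint q g t"
        unfolding U_def q_def using j by simp
      have "(U j has_real_derivative (\<Sum>i<q. u0 (j + Suc i) * t ^ i / fact i) + iint q g t) (at t within {0..h})"
        unfolding e1
        by (rule DERIV_add[OF poly_deriv[where q=q and c="\<lambda>i. u0 (j + i)"]]) (use iint_props[OF gc] t in blast)
      then show "(U j has_real_derivative U (Suc j) t) (at t within {0..h})" unfolding e2 .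
    next
      show "continuous_on {0..h} (U n)" using gc by (simp add: Un[abs_def])
    qed
  next
    fix i assume i: "i < n"
    define q where "q = n - Suc i"
    have ni: "n - i = Suc q" unfolding q_def using i by simp
    show "U i 0 = u0 i" unfolding U_def ni using i by (simp add: sum.lessThan_Suc_shift)
  next
    fix t assume t: "t \<in> {0..h}"
    have cn: "caputo (real n) U t = g t"
      unfolding caputo_def by (simp add: RL_0 Un)
    have "caputo \<alpha>1 U t = RL_int \<beta> (U m) t"
      unfolding caputo_def \<beta>_def m_def using c0 by (simp add: mreal m_def)
    also have "\<dots> = RL_int \<beta> w t"
      by (rule J_local) (use t Um in auto)
    finally have ca: "caputo \<alpha>1 U t = RL_int \<beta> w t" .
    show "caputo (real n) U t = f t (caputo \<alpha>1 U t)"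
      unfolding cn ca g_def V.gg_def ..
  qed
qed


end
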